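(* Let $k$ be a field of characteristic zero, let $q\in k$ satisfy $q^m=1$ with $m$ the minimal positive such integer, and assume $k$ contains all $m$th roots of unity. Let $f\in k(x,y)$ and suppose $f=\tau_{x,q}(g)-g+c$ with $g\in k(x,y)$ and $c\in k(y)(x^m)$. Let $\partial_y\in\{\Delta_y,D_y\}$. Then $f$ is exact with respect to $(\Delta_{x,q},\partial_y)$ if and only if $c=\partial_y(d)$ for some $d\in k(y)(x^m)$.
   Context: On $k(x,y)$: $\tau_{x,q}(f(x,y))=f(qx,y)$, $\sigma_y(f(x,y))=f(x,y+1)$, $\Delta_{x,q}=\tau_{x,q}-1$, $\Delta_y=\sigma_y-1$, and $D_y=\partial/\partial y$. A rational function $f\in k(x,y)$ is exact with respect to a pair $(\partial_x,\partial_y)$ of such operators if $f=\partial_x(g)+\partial_y(h)$ for some $g,h\in k(x,y)$. Here $k(y)(x^m)$ denotes the subfield of $k(x,y)$ generated over $k(y)$ by $x^m$. *)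

theory Defs
  imports "HOL-Computational_Algebra.Computational_Algebra"
begin

text \<open>Model of k(x,y): the fraction field of k[y][x].  An element of type
  'a poly poly is a polynomial in x (outer) whose coefficients are polynomials
  in y (inner).\<close>

type_synonym 'a ratxy = "'a poly poly fract"

definition frep :: "'a::field ratxy \<Rightarrow> 'a poly poly \<times> 'a poly poly" where
  "frep f = (SOME p. snd p \<noteq> 0 \<and> f = Fract (fst p) (snd p))"

definition tau_poly :: "'a::field \<Rightarrow> 'a poly poly \<Rightarrow> 'a poly poly" where
  "tau_poly q p = p \<circ>\<^sub>p [:0, [:q:]:]"

definition sigma_poly :: "'a::field poly poly \<Rightarrow> 'a poly poly" where
  "sigma_poly p = map_poly (\<lambda>c. c \<circ>\<^sub>p [:1, 1:]) p"

definition dy_poly :: "'a::field poly poly \<Rightarrow> 'a poly poly" where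
  "dy_poly p = map_poly pderiv p"

definition tau_xq :: "'a::field \<Rightarrow> 'a ratxy \<Rightarrow> 'a ratxy" where
  "tau_xq q f = (let r = frep f in Fract (tau_poly q (fst r)) (tau_poly q (snd r)))"

definition sigma_y :: "'a::field ratxy \<Rightarrow> 'a ratxy" where
  "sigma_y f = (let r = frep f in Fract (sigma_poly (fst r)) (sigma_poly (snd r)))"

definition Delta_xq :: "'a::field \<Rightarrow> 'a ratxy \<Rightarrow> 'a ratxy" where
  "Delta_xq q f = tau_xq q f - f"

definition Delta_y :: "'a::field ratxy \<Rightarrow> 'a ratxy" where
  "Delta_y f = sigma_y f - f"

definition D_y :: "'a::field ratxy \<Rightarrow> 'a ratxy" where
  "D_y f = (let r = frep f; a = fst r; b = snd r in
            Fract (dy_poly a * b - a * dy_poly b) (b * b))"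

definition exact :: "('a::field ratxy \<Rightarrow> 'a ratxy) \<Rightarrow> ('a ratxy \<Rightarrow> 'a ratxy) \<Rightarrow> 'a ratxy \<Rightarrow> bool" where
  "exact dx dy f \<longleftrightarrow> (\<exists>g h. f = dx g + dy h)"

definition in_ky_xm :: "nat \<Rightarrow> 'a::field ratxy \<Rightarrow> bool" where
  "in_ky_xm m f \<longleftrightarrow> (\<exists>a b. b \<noteq> 0 \<and> f = Fract a b \<and>
      (\<forall>i. \<not> m dvd i \<longrightarrow> coeff a i = 0) \<and> (\<forall>i. \<not> m dvd i \<longrightarrow> coeff b i = 0))"

end

theory Submission imports Defs begin

lemma coeff_tp: "coeff (tau_poly q p) i = smult (q ^ i) (coeff p i)"
  by (simp add: tau_poly_def coeff_pcompose_linear poly_const_pow)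

lemma tp_add: "tau_poly q (a + b) = tau_poly q a + tau_poly q b"
  by (simp add: tau_poly_def pcompose_add)
lemma tp_diff: "tau_poly q (a - b) = tau_poly q a - tau_poly q b"
  by (simp add: tau_poly_def pcompose_diff)
lemma tp_mult: "tau_poly q (a * b) = tau_poly q a * tau_poly q b"
  by (simp add: tau_poly_def pcompose_mult)
lemma tp_1: "tau_poly q 1 = 1"
  by (simp add: tau_poly_def pcompose_1)
lemma tp_prod: "tau_poly q (prod f A) = (\<Prod>i\<in>A. tau_poly q (f i))"
  by (simp add: tau_poly_def pcompose_prod)
lemma tp_nz: "q \<noteq> 0 \<Longrightarrow> b \<noteq> 0 \<Longrightarrow> tau_poly (q::'a::field) b \<noteq> 0"
proof
  assume q: "q \<noteq> 0" and b: "b \<noteq> 0" and t: "tau_poly q b = 0"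
  have "coeff b (degree b) \<noteq> 0" using b by simp
  moreover have "smult (q ^ degree b) (coeff b (degree b)) = 0"
    using t coeff_tp[of q b "degree b"] by simp
  ultimately show False using q by simp
qed
lemma tp_comp: "tau_poly q (tau_poly r p) = tau_poly (q * r) p"
  by (simp add: poly_eq_iff coeff_tp power_mult_distrib)
lemma tp_one: "tau_poly 1 p = p"
  by (simp add: poly_eq_iff coeff_tp)

lemma coeff_sp: "coeff (sigma_poly p) i = coeff p i \<circ>\<^sub>p [:1,1:]"
  by (simp add: sigma_poly_def coeff_map_poly)
lemma sp_add: "sigma_poly (a + b) = sigma_poly a + sigma_poly b"
  by (simp add: poly_eq_iff coeff_sp pcompose_add)
lemma sp_diff: "sigma_poly (a - b) = sigma_poly a - sigma_poly b"
  by (simp add: poly_eq_iff coeff_sp pcompose_diff)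
lemma sp_mult: "sigma_poly (a * b) = sigma_poly a * sigma_poly b"
  by (simp add: poly_eq_iff coeff_sp coeff_mult pcompose_sum pcompose_mult)
lemma sp_nz: "b \<noteq> 0 \<Longrightarrow> sigma_poly (b::'a::field poly poly) \<noteq> 0"
proof
  assume b: "b \<noteq> 0" and t: "sigma_poly b = 0"
  have "coeff b (degree b) \<noteq> 0" using b by simp
  moreover have "coeff b (degree b) \<circ>\<^sub>p [:1,1:] = 0"
    using t coeff_sp[of b "degree b"] by simp
  moreover have "degree [:1,1::'a:] > 0" by simp
  ultimately show False using pcompose_eq_0 by blast
qed
lemma sp_tp: "sigma_poly (tau_poly q p) = tau_poly q (sigma_poly p)"
  by (simp add: poly_eq_iff coeff_sp coeff_tp pcompose_smult)

lemma coeff_dp: "coeff (dy_poly p) i = pderiv (coeff p i)"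
  by (simp add: dy_poly_def coeff_map_poly)
lemma dp_add: "dy_poly (a + b) = dy_poly a + dy_poly b"
  by (simp add: poly_eq_iff coeff_dp pderiv_add)
lemma pderiv_sum': "pderiv (sum f A) = (\<Sum>x\<in>A. pderiv (f x))"
  using higher_pderiv_sum[of 1] by simp
lemma dp_mult: "dy_poly (a * b) = dy_poly a * b + a * dy_poly (b::'a::field poly poly)"
proof (rule poly_eqI)
  fix n
  have "coeff (dy_poly (a * b)) n = (\<Sum>i\<le>n. coeff a i * pderiv (coeff b (n-i)) + coeff b (n-i) * pderiv (coeff a i))"
    by (simp add: coeff_dp coeff_mult pderiv_sum' pderiv_mult)
  also have "\<dots> = (\<Sum>i\<le>n. pderiv (coeff a i) * coeff b (n-i)) + (\<Sum>i\<le>n. coeff a i * pderiv (coeff b (n-i)))"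
    by (simp add: sum.distrib mult.commute add.commute)
  also have "\<dots> = coeff (dy_poly a * b + a * dy_poly b) n"
    by (simp add: coeff_dp coeff_mult)
  finally show "coeff (dy_poly (a * b)) n = coeff (dy_poly a * b + a * dy_poly b) n" .
qed
lemma dp_tp: "dy_poly (tau_poly q p) = tau_poly q (dy_poly p)"
  by (simp add: poly_eq_iff coeff_dp coeff_tp pderiv_smult)


lemma frep_spec: "snd (frep f) \<noteq> 0 \<and> f = Fract (fst (frep f)) (snd (frep f))"
proof -
  obtain a b where "f = Fract a b" "b \<noteq> 0" by (cases f)
  then have "\<exists>p. snd p \<noteq> 0 \<and> f = Fract (fst p) (snd p)" by (intro exI[of _ "(a,b)"]) simp
  then show ?thesis unfolding frep_def by (rule someI_ex)
qed

lemma tau_Fract: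
  assumes q: "(q::'a::field) \<noteq> 0" and b: "b \<noteq> 0"
  shows "tau_xq q (Fract a b) = Fract (tau_poly q a) (tau_poly q b)"
proof -
  define r where "r = frep (Fract a b)"
  from frep_spec[of "Fract a b"] have r: "snd r \<noteq> 0" "Fract a b = Fract (fst r) (snd r)"
    by (auto simp: r_def)
  from r b have "a * snd r = fst r * b" by (simp add: eq_fract)
  then have "tau_poly q a * tau_poly q (snd r) = tau_poly q (fst r) * tau_poly q b"
    by (metis tp_mult)
  then show ?thesis using r b q
    by (simp add: tau_xq_def Let_def r_def[symmetric] eq_fract tp_nz)
qed

lemma sigma_Fract:
  assumes b: "b \<noteq> 0"
  shows "sigma_y (Fract a b) = Fract (sigma_poly a) (sigma_poly (b::'a::field poly poly))"
proof -
  define r where "r = frep (Fract a b)"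
  from frep_spec[of "Fract a b"] have r: "snd r \<noteq> 0" "Fract a b = Fract (fst r) (snd r)"
    by (auto simp: r_def)
  from r b have "a * snd r = fst r * b" by (simp add: eq_fract)
  then have "sigma_poly a * sigma_poly (snd r) = sigma_poly (fst r) * sigma_poly b"
    by (metis sp_mult)
  then show ?thesis using r b
    by (simp add: sigma_y_def Let_def r_def[symmetric] eq_fract sp_nz)
qed

lemma Dy_Fract:
  assumes b: "b \<noteq> 0"
  shows "D_y (Fract a b) = Fract (dy_poly a * b - a * dy_poly b) (b * (b::'a::field poly poly))"
proof -
  define r where "r = frep (Fract a b)"
  from frep_spec[of "Fract a b"] have r: "snd r \<noteq> 0" "Fract a b = Fract (fst r) (snd r)"
    by (auto simp: r_def)
  obtain A B where AB: "A = fst r" "B = snd r" by blast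
  from r b have e: "a * B = A * b" by (simp add: eq_fract AB)
  then have "dy_poly (a * B) = dy_poly (A * b)" by simp
  then have e': "dy_poly a * B + a * dy_poly B = dy_poly A * b + A * dy_poly b"
    by (simp add: dp_mult)
  have "(dy_poly A * B - A * dy_poly B) * (b * b) = (dy_poly a * b - a * dy_poly b) * (B * B)"
  proof -
    have "(dy_poly a * b - a * dy_poly b) * (B * B)
       = (dy_poly a * B + a * dy_poly B) * (b * B) - (a * B) * b * dy_poly B - (a * B) * B * dy_poly b"
      by (simp add: algebra_simps)
    also have "\<dots> = (dy_poly A * b + A * dy_poly b) * (b * B) - (A * b) * b * dy_poly B - (A * b) * B * dy_poly b"
      by (simp only: e e')
    also have "\<dots> = (dy_poly A * B - A * dy_poly B) * (b * b)"
      by (simp add: algebra_simps)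
    finally show ?thesis by simp
  qed
  then show ?thesis using r b
    by (simp add: D_y_def Let_def r_def[symmetric] eq_fract AB[symmetric])
qed


lemma sum_shift_cyc: "F n = F 0 \<Longrightarrow> (\<Sum>j<n. F (Suc j)) = (\<Sum>j<n. (F j :: 'b::comm_monoid_add))"
proof (cases n)
  case (Suc k)
  assume h: "F n = F 0"
  have "(\<Sum>j<n. F (Suc j)) = (\<Sum>j<k. F (Suc j)) + F (Suc k)" using Suc by (simp only: sum.lessThan_Suc)
  also have "\<dots> = F 0 + (\<Sum>j<k. F (Suc j))" using h Suc by (simp add: add.commute)
  also have "\<dots> = (\<Sum>j<n. F j)" using Suc by (simp only: sum.lessThan_Suc_shift)
  finally show ?thesis .
qed simp
lemma prod_shift_cyc: "F n = F 0 \<Longrightarrow> (\<Prod>j<n. F (Suc j)) = (\<Prod>j<n. (F j :: 'b::comm_monoid_mult))"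
proof (cases n)
  case (Suc k)
  assume h: "F n = F 0"
  have "(\<Prod>j<n. F (Suc j)) = (\<Prod>j<k. F (Suc j)) * F (Suc k)" using Suc by (simp only: prod.lessThan_Suc)
  also have "\<dots> = F 0 * (\<Prod>j<k. F (Suc j))" using h Suc by (simp add: mult.commute)
  also have "\<dots> = (\<Prod>j<n. F j)" using Suc by (simp only: prod.lessThan_Suc_shift)
  finally show ?thesis .
qed simp

context fixes q :: "'a::field" assumes q: "q \<noteq> 0"
begin
lemma T_add: "tau_xq q (x + y) = tau_xq q x + tau_xq q y"
  by (cases x, cases y) (simp add: tau_Fract q tp_add tp_mult tp_nz)
lemma T_diff: "tau_xq q (x - y) = tau_xq q x - tau_xq q y"
  by (cases x, cases y) (simp add: tau_Fract q tp_diff tp_mult tp_nz)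
lemma T_mult: "tau_xq q (x * y) = tau_xq q x * tau_xq q y"
  by (cases x, cases y) (simp add: tau_Fract q tp_mult tp_nz)
lemma T_zero: "tau_xq q 0 = 0"
  using T_diff[of 0 0] by simp
lemma T_sum: "tau_xq q (sum f A) = (\<Sum>j\<in>A. tau_xq q (f j))"
  by (induction A rule: infinite_finite_induct) (simp_all add: T_zero T_add)
lemma tp_of_nat: "tau_poly q (of_nat n) = of_nat n"
  by (induction n) (simp_all add: tp_add tp_1 tau_poly_def[of q 0])
lemma T_of_nat: "tau_xq q (of_nat n) = of_nat n"
  by (simp add: of_nat_fract tau_Fract q tp_of_nat tp_1)
end

lemma T_comp: "q \<noteq> 0 \<Longrightarrow> r \<noteq> 0 \<Longrightarrow> tau_xq q (tau_xq r x) = tau_xq (q * (r::'a::field)) x"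
  by (cases x) (simp add: tau_Fract tp_nz tp_comp)
lemma T_one: "tau_xq 1 x = x"
  by (cases x) (simp add: tau_Fract tp_one)

lemma sigma_add: "sigma_y (x + y) = sigma_y x + sigma_y (y :: 'a::field ratxy)"
  by (cases x, cases y) (simp add: sigma_Fract sp_add sp_mult sp_nz)
lemma sigma_T: "q \<noteq> 0 \<Longrightarrow> sigma_y (tau_xq q x) = tau_xq q (sigma_y (x :: 'a::field ratxy))"
  by (cases x) (simp add: sigma_Fract tau_Fract sp_nz tp_nz sp_tp)
lemma Dy_add: "D_y (x + y) = D_y x + D_y (y :: 'a::field ratxy)"
proof (cases x, cases y)
  fix a b c d assume x: "x = Fract a b" "b \<noteq> 0" and y: "y = Fract c d" "d \<noteq> 0"
  show ?thesis using x y
    by (simp add: Dy_Fract eq_fract dp_add dp_mult) (simp add: algebra_simps)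
qed
lemma Dy_T: "q \<noteq> 0 \<Longrightarrow> D_y (tau_xq q x) = tau_xq q (D_y (x :: 'a::field ratxy))"
  by (cases x) (simp add: Dy_Fract tau_Fract tp_nz tp_mult tp_diff dp_tp)

definition good :: "('a::field ratxy \<Rightarrow> 'a ratxy) \<Rightarrow> bool" where
  "good dy \<longleftrightarrow> (\<forall>x y. dy (x + y) = dy x + dy y) \<and> (\<forall>q x. q \<noteq> 0 \<longrightarrow> dy (tau_xq q x) = tau_xq q (dy x))"

lemma good_Delta: "good Delta_y"
  unfolding good_def Delta_y_def by (simp add: sigma_add sigma_T T_diff)
lemma good_Dy: "good D_y"
  unfolding good_def by (simp add: Dy_add Dy_T)


lemma tp_fixed_coeff:
  assumes A: "tau_poly q A = A" and m: "m > 0" and mn: "\<forall>j. 0 < j \<and> j < m \<longrightarrow> q ^ j \<noteq> 1"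
    and qm: "(q::'a::field) ^ m = 1" and i: "\<not> m dvd i"
  shows "coeff A i = 0"
proof (rule ccontr)
  assume nz: "coeff A i \<noteq> 0"
  from A have "coeff (tau_poly q A) i = coeff A i" by simp
  then have "smult (q ^ i) (coeff A i) - smult 1 (coeff A i) = 0" by (simp add: coeff_tp)
  then have "smult (q ^ i - 1) (coeff A i) = 0" by (simp only: smult_diff_left)
  then have "q ^ i = 1" using nz by simp
  moreover have "q ^ i = (q ^ m) ^ (i div m) * q ^ (i mod m)"
  proof -
    have "q ^ i = q ^ (m * (i div m) + i mod m)" by simp
    also have "\<dots> = (q ^ m) ^ (i div m) * q ^ (i mod m)" by (simp only: power_add power_mult)
    finally show ?thesis .
  qed
  ultimately have "q ^ (i mod m) = 1" using qm by simp
  moreover have "0 < i mod m" "i mod m < m" using i m by (auto simp: mod_greater_zero_iff_not_dvd)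
  ultimately show False using mn by blast
qed

lemma in_fixed:
  assumes c: "in_ky_xm m c" and r: "(r::'a::field) ^ m = 1" and m: "m > 0"
  shows "tau_xq r c = c"
proof -
  from c obtain a b where ab: "b \<noteq> 0" "c = Fract a b" "\<forall>i. \<not> m dvd i \<longrightarrow> coeff a i = 0"
    "\<forall>i. \<not> m dvd i \<longrightarrow> coeff b i = 0" unfolding in_ky_xm_def by blast
  have r0: "r \<noteq> 0" proof assume "r = 0" with r m show False by (simp add: power_0_left) qed
  have fixp: "tau_poly r p = p" if "\<forall>i. \<not> m dvd i \<longrightarrow> coeff p i = 0" for p
  proof (rule poly_eqI)
    fix i
    show "coeff (tau_poly r p) i = coeff p i"
    proof (cases "m dvd i")
      case True
      then obtain k where "i = m * k" by blast
      then have "r ^ i = 1" using r by (simp add: power_mult)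
      then show ?thesis by (simp add: coeff_tp)
    next
      case False then show ?thesis using that by (simp add: coeff_tp)
    qed
  qed
  show ?thesis using ab by (simp add: tau_Fract r0 fixp)
qed

lemma fixed_in:
  assumes u: "tau_xq q u = u" and m: "m > 0" and mn: "\<forall>j. 0 < j \<and> j < m \<longrightarrow> q ^ j \<noteq> 1"
    and qm: "(q::'a::field) ^ m = 1"
  shows "in_ky_xm m u"
proof -
  have q0: "q \<noteq> 0" proof assume "q = 0" with qm m show False by (simp add: power_0_left) qed
  obtain a b where ab: "u = Fract a b" "b \<noteq> 0" by (cases u)
  define P where "P = (\<Prod>j<m - 1. tau_poly (q ^ Suc j) b)"
  define B where "B = b * P"
  define A where "A = a * P"
  have P0: "P \<noteq> 0" unfolding P_def using ab q0 by (simp add: tp_nz)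
  have B0: "B \<noteq> 0" using P0 ab by (simp add: B_def)
  have uAB: "u = Fract A B" using ab P0 by (simp add: A_def B_def eq_fract)
  have Bp: "B = (\<Prod>j<m. tau_poly (q ^ j) b)"
  proof -
    obtain k where k: "m = Suc k" using m by (cases m) auto
    have "(\<Prod>j<m. tau_poly (q ^ j) b) = tau_poly (q ^ 0) b * (\<Prod>j<k. tau_poly (q ^ Suc j) b)"
      unfolding k by (rule prod.lessThan_Suc_shift)
    then show ?thesis by (simp add: B_def P_def tp_one k)
  qed
  have tB: "tau_poly q B = B"
  proof -
    have "tau_poly q B = (\<Prod>j<m. tau_poly (q ^ Suc j) b)"
      by (simp add: Bp tp_prod tp_comp)
    also have "\<dots> = B" unfolding Bp
      by (rule prod_shift_cyc[where F = "\<lambda>j. tau_poly (q ^ j) b"]) (simp add: qm tp_one)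
    finally show ?thesis .
  qed
  have "Fract (tau_poly q A) B = Fract A B"
    using u uAB q0 B0 by (metis tau_Fract tB)
  then have "tau_poly q A * B = A * B" using B0 by (simp add: eq_fract)
  then have tA: "tau_poly q A = A" using B0 by simp
  show ?thesis unfolding in_ky_xm_def
    using tp_fixed_coeff[OF tA m mn qm] tp_fixed_coeff[OF tB m mn qm] B0 uAB by blast
qed

theorem theorem1:
  fixes q :: "'a::field_char_0" and m :: nat
    and f g c :: "'a ratxy" and dy :: "'a ratxy \<Rightarrow> 'a ratxy"
  assumes "m > 0" and "q ^ m = 1" and "\<forall>j. 0 < j \<and> j < m \<longrightarrow> q ^ j \<noteq> 1"
    and "card {z::'a. z ^ m = 1} = m"
    and "in_ky_xm m c"
    and "f = tau_xq q g - g + c"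
    and "dy \<in> {Delta_y, D_y}"
  shows "exact (Delta_xq q) dy f \<longleftrightarrow> (\<exists>d. in_ky_xm m d \<and> c = dy d)"
proof
  assume "\<exists>d. in_ky_xm m d \<and> c = dy d"
  then obtain d where "c = dy d" by blast
  then show "exact (Delta_xq q) dy f"
    unfolding exact_def Delta_xq_def using assms(6) by (intro exI[of _ g] exI[of _ d]) simp
next
  note m = assms(1) and qm = assms(2) and mn = assms(3)
  have q0: "q \<noteq> 0" proof assume "q = 0" with qm m show False by (simp add: power_0_left) qed
  have qj0: "q ^ j \<noteq> 0" for j using q0 by simp
  have gd: "good dy" using assms(7) good_Delta good_Dy by blast
  have dadd: "dy (x + y) = dy x + dy y" for x y using gd unfolding good_def by blast
  have dT: "r \<noteq> 0 \<Longrightarrow> dy (tau_xq r x) = tau_xq r (dy x)" for r x using gd unfolding good_def by blast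
  have d0: "dy 0 = 0"
  proof -
    have "dy 0 + dy 0 = dy 0 + 0" by (simp only: dadd[of 0 0, symmetric] add_0_right add_0_left)
    then show ?thesis by (simp only: add_left_cancel)
  qed
  have dsum: "dy (sum F A) = (\<Sum>j\<in>A. dy (F j))" for F and A :: "nat set"
    by (induction A rule: infinite_finite_induct) (simp_all add: d0 dadd)
  have dnat: "dy (of_nat n * x) = of_nat n * dy x" for n x
    by (induction n) (simp_all add: d0 dadd algebra_simps)
  define S where "S x = (\<Sum>j<m. tau_xq (q ^ j) x)" for x
  have Sdiff: "S (x - y) = S x - S y" for x y
    by (simp add: S_def T_diff qj0 q0 sum_subtractf)
  have Sadd: "S (x + y) = S x + S y" for x y
    by (simp add: S_def T_add qj0 q0 sum.distrib)
  have ST: "S (tau_xq q x) = S x" for x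
  proof -
    have "S (tau_xq q x) = (\<Sum>j<m. tau_xq (q ^ Suc j) x)"
      by (simp add: S_def T_comp qj0 q0 mult.commute)
    also have "\<dots> = S x" unfolding S_def
      by (rule sum_shift_cyc[where F = "\<lambda>j. tau_xq (q ^ j) x"]) (simp add: qm T_one)
    finally show ?thesis .
  qed
  have TS: "tau_xq q (S x) = S x" for x
  proof -
    have "tau_xq q (S x) = S (tau_xq q x)"
      by (simp add: S_def T_sum q0 T_comp qj0 mult.commute)
    then show ?thesis using ST by simp
  qed
  have Sc: "S c = of_nat m * c"
  proof -
    have "tau_xq (q ^ j) c = c" for j
      by (rule in_fixed[OF assms(5) _ m]) (metis qm power_one power_mult mult.commute)
    then show ?thesis by (simp add: S_def)
  qed
  have Sd: "S (dy x) = dy (S x)" for x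
    by (simp add: S_def dsum dT qj0 q0)
  assume "exact (Delta_xq q) dy f"
  then obtain G h where fe: "f = Delta_xq q G + dy h" unfolding exact_def by blast
  have "c = (tau_xq q G - G) - (tau_xq q g - g) + dy h"
    using fe assms(6) by (simp add: Delta_xq_def algebra_simps)
  then have "S c = S (dy h)"
    by (simp add: Sadd Sdiff ST)
  then have mc: "of_nat m * c = dy (S h)" by (simp add: Sc Sd)
  have mnz: "(of_nat m :: 'a ratxy) \<noteq> 0"
  proof
    assume "(of_nat m :: 'a ratxy) = 0"
    then have "Fract (of_nat m) 1 = Fract 0 (1 :: 'a poly poly)" by (simp add: of_nat_fract Zero_fract_def)
    then have "(of_nat m :: 'a poly poly) = 0" by (simp add: eq_fract)
    then show False using m by simp
  qed
  define u where "u = S h / of_nat m"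
  have mu: "of_nat m * u = S h" using mnz by (simp add: u_def)
  have "of_nat m * c = of_nat m * dy u" using mc mu dnat by metis
  then have cu: "c = dy u" using mnz by simp
  have "of_nat m * tau_xq q u = of_nat m * u"
    using mu TS[of h] by (metis T_mult T_of_nat q0)
  then have "tau_xq q u = u" using mnz by simp
  then have "in_ky_xm m u" using fixed_in m mn qm by blast
  then show "\<exists>d. in_ky_xm m d \<and> c = dy d" using cu by blast
qed

end
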